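(* Let $X$ be a real Hilbert space, $A,B\colon X\rightrightarrows X$ maximally monotone, $D:=\operatorname{dom}A-\operatorname{dom}B$, $R:=\operatorname{ran}A+\operatorname{ran}B$, $v_D:=P_{\overline D}(0)$, $v_R:=P_{\overline R}(0)$. Then: (i) $v_D\in(-\operatorname{rec}\overline{\operatorname{dom}}A)^\ominus\cap(\operatorname{rec}\overline{\operatorname{dom}}B)^\ominus=(-(\operatorname{rec}\overline{\operatorname{dom}}A)^\ominus)\cap(\operatorname{rec}\overline{\operatorname{dom}}B)^\ominus$; (ii) $v_D\in(-\operatorname{rec}\overline{\operatorname{ran}}A)\cap\operatorname{rec}\overline{\operatorname{ran}}B$; (iii) $v_R\in(-\operatorname{rec}\overline{\operatorname{ran}}A)^\ominus\cap(-\operatorname{rec}\overline{\operatorname{ran}}B)^\ominus=-\big((\operatorname{rec}\overline{\operatorname{ran}}A)^\ominus\cap(\operatorname{rec}\overline{\operatorname{ran}}B)^\ominus\big)$; (iv) $v_R\in(-\operatorname{rec}\overline{\operatorname{dom}}A)\cap(-\operatorname{rec}\overline{\operatorname{dom}}B)=-(\operatorname{rec}\overline{\operatorname{dom}}A\cap\operatorname{rec}\overline{\operatorname{dom}}B)$; (v) $\langle v_D,v_R\rangle=0$; (vi) $v_D+v_R\in\overline D\cap\overline R$. Moreover, let $T:=\operatorname{Id}-J_A+J_BR_A$, $v:=P_{\overline{\operatorname{ran}}(\operatorname{Id}-T)}(0)$, and assume $\overline{\operatorname{ran}}(\operatorname{Id}-T)=\overline{D\cap R}=\overline D\cap\overline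 R$. Then (vii) $v=v_D+v_R$ and (viii) $\|v\|^2=\|v_D\|^2+\|v_R\|^2=\|(v_R,v_D)\|^2$.
   Context: $J_C:=(\operatorname{Id}+C)^{-1}$, $R_C:=2J_C-\operatorname{Id}$. $P_S$ is the projection onto a nonempty closed convex set $S$ (the sets $\overline D,\overline R$ are closed convex). $\overline{\operatorname{dom}}A$, $\overline{\operatorname{ran}}A$ are the closures of domain and range (closed convex sets). $\operatorname{rec}C:=\{d: C+d\subseteq C\}$ is the recession cone of a convex set $C$; for a set $S$, $S^\ominus:=\{u\in X:\langle u,s\rangle\le0\ \forall s\in S\}$ is the polar cone. $\|(v_R,v_D)\|$ is the norm in $X\times X$. *)

theory Defs
  imports "HOL-Analysis.Analysis"
begin

text \<open>Set-valued operators on a real Hilbert space are represented by their graphs.\<close>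

type_synonym 'a operator = "('a \<times> 'a) set"

definition mono_op :: "('a::real_inner) operator \<Rightarrow> bool" where
  "mono_op A \<longleftrightarrow> (\<forall>x u y w. (x, u) \<in> A \<longrightarrow> (y, w) \<in> A \<longrightarrow> inner (x - y) (u - w) \<ge> 0)"

definition max_mono :: "('a::real_inner) operator \<Rightarrow> bool" where
  "max_mono A \<longleftrightarrow> mono_op A \<and> (\<forall>B. mono_op B \<and> A \<subseteq> B \<longrightarrow> B = A)"

definition dom_op :: "'a operator \<Rightarrow> 'a set" where
  "dom_op A = {x. \<exists>u. (x, u) \<in> A}"

definition ran_op :: "'a operator \<Rightarrow> 'a set" where
  "ran_op A = {u. \<exists>x. (x, u) \<in> A}"

text \<open>Resolvent \<open>J_A = (Id + A)^{-1}\<close>: the (for maximally monotone A unique) point y with x - y in A y.\<close>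
definition resolvent :: "('a::real_vector) operator \<Rightarrow> 'a \<Rightarrow> 'a" where
  "resolvent A x = (THE y. (y, x - y) \<in> A)"

definition reflected_resolvent :: "('a::real_vector) operator \<Rightarrow> 'a \<Rightarrow> 'a" where
  "reflected_resolvent A x = 2 *\<^sub>R resolvent A x - x"

text \<open>Metric projection onto a set (for nonempty closed convex sets in a Hilbert space,
  the unique nearest point).\<close>
definition proj :: "('a::real_inner) set \<Rightarrow> 'a \<Rightarrow> 'a" where
  "proj S a = (THE x. x \<in> S \<and> (\<forall>y\<in>S. dist a x \<le> dist a y))"

definition rec_cone :: "('a::real_vector) set \<Rightarrow> 'a set" where
  "rec_cone C = {d. \<forall>c\<in>C. c + d \<in> C}"

definition polar_cone :: "('a::real_inner) set \<Rightarrow> 'a set" where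
  "polar_cone S = {u. \<forall>s\<in>S. inner u s \<le> 0}"

definition set_minus :: "('a::ab_group_add) set \<Rightarrow> 'a set \<Rightarrow> 'a set" where
  "set_minus S T = {s - t | s t. s \<in> S \<and> t \<in> T}"

definition set_plus :: "('a::ab_group_add) set \<Rightarrow> 'a set \<Rightarrow> 'a set" where
  "set_plus S T = {s + t | s t. s \<in> S \<and> t \<in> T}"

end

theory Submission
  imports Defs
begin

lemma parallelogram_sq:
  fixes u v :: "'a::real_inner"
  shows "(norm (u - v))^2 = 2 * (norm u)^2 + 2 * (norm v)^2 - (norm (u + v))^2"
  by (simp add: power2_norm_eq_inner inner_diff inner_add algebra_simps inner_commute)

lemma hilbert_proj_exists:
  fixes S :: "'a::{real_inner,complete_space} set"
  assumes cl: "closed S" and cv: "convex S" and ne: "S \<noteq> {}"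
  shows "\<exists>x\<in>S. \<forall>y\<in>S. dist a x \<le> dist a y"
proof -
  define d where "d = infdist a S"
  have d0: "d \<ge> 0" by (simp add: d_def infdist_nonneg)
  have dle: "d \<le> dist a y" if "y \<in> S" for y using that by (simp add: d_def infdist_le)
  have "\<exists>y\<in>S. dist a y < d + 1 / real (Suc n)" for n
  proof -
    have "Inf ((\<lambda>y. dist a y) ` S) < d + 1 / real (Suc n)"
      using infdist_notempty[OF ne, of a] by (simp add: d_def)
    from cInf_lessD[OF _ this] ne show ?thesis by auto
  qed
  then obtain y where yS: "\<And>n. y n \<in> S" and yd: "\<And>n. dist a (y n) < d + 1 / real (Suc n)"
    by metis
  have key: "(norm (y m - y n))^2 \<le> 2 * (2*d+1) * (1 / real (Suc m) + 1 / real (Suc n))" for m n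
  proof -
    let ?u = "a - y m" and ?v = "a - y n"
    obtain em en where emd: "em = 1 / real (Suc m)" and end': "en = 1 / real (Suc n)" by blast
    have mid: "(1/2) *\<^sub>R y m + (1/2) *\<^sub>R y n \<in> S"
      using cv yS by (simp add: convex_def)
    have "d \<le> dist a ((1/2) *\<^sub>R y m + (1/2) *\<^sub>R y n)" using dle[OF mid] .
    also have "\<dots> = norm (?u + ?v) / 2"
    proof -
      have "?u + ?v = 2 *\<^sub>R (a - ((1/2) *\<^sub>R y m + (1/2) *\<^sub>R y n))"
        by (simp add: algebra_simps scaleR_2)
      then show ?thesis by (simp add: dist_norm)
    qed
    finally have h1: "2*d \<le> norm (?u + ?v)" by simp
    have h1': "(2*d)^2 \<le> (norm (?u + ?v))^2" using h1 d0 by (intro power_mono) auto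
    have em: "em \<le> 1" "0 \<le> em" and en: "en \<le> 1" "0 \<le> en" using emd end' by auto
    have pm: "norm ?u < d + em" using yd[of m] emd by (simp add: dist_norm)
    have pn: "norm ?v < d + en" using yd[of n] end' by (simp add: dist_norm)
    have qm: "(norm ?u)^2 \<le> d^2 + (2*d+1) * em"
    proof -
      have "(norm ?u)^2 \<le> (d + em)^2" using pm by (intro power_mono) auto
      also have "\<dots> = d^2 + (2*d + em) * em"
        by (simp add: power2_eq_square algebra_simps)
      also have "\<dots> \<le> d^2 + (2*d+1) * em"
        using em by (intro add_left_mono mult_right_mono) auto
      finally show ?thesis .
    qed
    have qn: "(norm ?v)^2 \<le> d^2 + (2*d+1) * en"
    proof -
      have "(norm ?v)^2 \<le> (d + en)^2" using pn by (intro power_mono) auto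
      also have "\<dots> = d^2 + (2*d + en) * en"
        by (simp add: power2_eq_square algebra_simps)
      also have "\<dots> \<le> d^2 + (2*d+1) * en"
        using en by (intro add_left_mono mult_right_mono) auto
      finally show ?thesis .
    qed
    have "(norm (y m - y n))^2 = (norm (?v - ?u))^2" by (simp add: norm_minus_commute)
    also have "\<dots> = 2 * (norm ?v)^2 + 2 * (norm ?u)^2 - (norm (?v + ?u))^2"
      by (rule parallelogram_sq)
    also have "\<dots> \<le> 2 * (norm ?v)^2 + 2 * (norm ?u)^2 - (2*d)^2"
      using h1' by (simp add: add.commute)
    also have "\<dots> \<le> 2 * (2*d+1) * (em + en)"
      using qm qn by (simp add: power2_eq_square algebra_simps)
    finally show ?thesis using emd end' by simp
  qed
  have "Cauchy y"
  proof (rule CauchyI)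
    fix e :: real assume e: "0 < e"
    obtain N :: nat where N: "4 * (2*d+1) / e^2 < real N"
      using reals_Archimedean2 by blast
    show "\<exists>M. \<forall>m\<ge>M. \<forall>n\<ge>M. norm (y m - y n) < e"
    proof (intro exI allI impI)
      fix m n assume m: "N \<le> m" and n: "N \<le> n"
      have "1 / real (Suc m) \<le> 1 / real (Suc N)" using m by (simp add: frac_le)
      moreover have "1 / real (Suc n) \<le> 1 / real (Suc N)" using n by (simp add: frac_le)
      ultimately have "1 / real (Suc m) + 1 / real (Suc n) \<le> 2 / real (Suc N)" by simp
      then have "2 * (2*d+1) * (1 / real (Suc m) + 1 / real (Suc n)) \<le> 2 * (2*d+1) * (2 / real (Suc N))"
        using d0 by (intro mult_left_mono) auto
      then have "(norm (y m - y n))^2 \<le> 2 * (2*d+1) * (2 / real (Suc N))"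
        using key[of m n] by linarith
      also have "\<dots> < e^2"
      proof -
        have "4 * (2*d+1) < e^2 * real (Suc N)"
          using N e by (simp add: field_simps) (smt (verit) zero_less_power)
        then show ?thesis using e by (simp add: field_simps)
      qed
      finally show "norm (y m - y n) < e"
        using e by (smt (verit) power_mono norm_ge_zero)
    qed
  qed
  then obtain x where lim: "y \<longlonglongrightarrow> x" using Cauchy_convergent_iff convergent_def by blast
  have xS: "x \<in> S" using closed_sequentially[OF cl] yS lim by blast
  have "dist a x \<le> d"
  proof (rule tendsto_le[OF trivial_limit_sequentially])
    show "(\<lambda>n. dist a (y n)) \<longlonglongrightarrow> dist a x" using lim by (intro tendsto_intros)
    show "(\<lambda>n. d + 1 / real (Suc n)) \<longlonglongrightarrow> d"
    proof -
      have "(\<lambda>n. 1 / real (Suc n)) \<longlonglongrightarrow> 0"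
        using LIMSEQ_Suc[OF lim_inverse_n'] by (simp add: inverse_eq_divide)
      from tendsto_add[OF tendsto_const[of d] this] show ?thesis by simp
    qed
    show "\<forall>\<^sub>F n in sequentially. dist a (y n) \<le> d + 1 / real (Suc n)"
      using yd less_imp_le by (intro always_eventually) blast
  qed
  then show ?thesis using xS dle by (meson order_trans)
qed

lemma proj_props:
  fixes S :: "'a::{real_inner,complete_space} set"
  assumes cl: "closed S" and cv: "convex S" and ne: "S \<noteq> {}"
  shows "proj S a \<in> S" "\<forall>y\<in>S. dist a (proj S a) \<le> dist a y"
    "\<forall>y\<in>S. inner (a - proj S a) (y - proj S a) \<le> 0"
proof -
  have ex1: "\<exists>!x. x \<in> S \<and> (\<forall>y\<in>S. dist a x \<le> dist a y)"
    using hilbert_proj_exists[OF cl cv ne, of a] any_closest_point_unique[OF cv cl] by blast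
  have P: "proj S a \<in> S \<and> (\<forall>y\<in>S. dist a (proj S a) \<le> dist a y)"
    unfolding proj_def by (rule theI'[OF ex1])
  then show "proj S a \<in> S" "\<forall>y\<in>S. dist a (proj S a) \<le> dist a y" by auto
  show "\<forall>y\<in>S. inner (a - proj S a) (y - proj S a) \<le> 0"
    using any_closest_point_dot[OF cv cl] P by blast
qed

lemma proj_min_norm_sq:
  fixes S :: "'a::{real_inner,complete_space} set"
  assumes "closed S" "convex S" "q \<in> S"
  shows "(norm (q - proj S 0))^2 \<le> (norm q)^2 - (norm (proj S 0))^2"
proof -
  have ne: "S \<noteq> {}" using assms by auto
  let ?p = "proj S 0"
  have "inner (0 - ?p) (q - ?p) \<le> 0" using proj_props(3)[OF assms(1,2) ne, of 0] assms(3) by blast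
  then have "inner ?p (q - ?p) \<ge> 0" by simp
  moreover have "(norm q)^2 = (norm ?p)^2 + 2 * inner ?p (q - ?p) + (norm (q - ?p))^2"
    by (simp add: power2_norm_eq_inner inner_diff inner_add algebra_simps inner_commute)
  ultimately show ?thesis by linarith
qed

lemma proj_nonexpand_to:
  fixes S :: "'a::{real_inner,complete_space} set"
  assumes "closed S" "convex S" "c \<in> S"
  shows "norm (proj S z - c) \<le> norm (z - c)"
proof -
  have ne: "S \<noteq> {}" using assms by auto
  let ?p = "proj S z"
  have h: "inner (z - ?p) (c - ?p) \<le> 0" using proj_props(3)[OF assms(1,2) ne, of z] assms(3) by blast
  have "(norm (z - c))^2 = (norm (z - ?p))^2 + (norm (?p - c))^2 - 2 * inner (z - ?p) (c - ?p)"
    by (simp add: power2_norm_eq_inner inner_diff inner_add algebra_simps inner_commute)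
  then have "(norm (?p - c))^2 \<le> (norm (z - c))^2" using h by (smt (verit) zero_le_power2)
  then show ?thesis by (simp add: power2_le_iff_abs_le)
qed

lemma fip_hilbert:
  fixes FF :: "'a::{real_inner,complete_space} set set"
  assumes cc: "\<And>K. K \<in> FF \<Longrightarrow> closed K \<and> convex K"
    and K0: "K0 \<in> FF" and bK0: "bounded K0"
    and fin: "\<And>G. finite G \<Longrightarrow> G \<subseteq> FF \<Longrightarrow> K0 \<inter> \<Inter>G \<noteq> {}"
  shows "\<Inter>FF \<noteq> {}"
proof -
  define C where "C G = K0 \<inter> \<Inter>G" for G
  define m where "m G = norm (proj (C G) 0)" for G
  define Gs where "Gs = {G. finite G \<and> G \<subseteq> FF}"
  have Ccl: "closed (C G)" "convex (C G)" "C G \<noteq> {}" if "G \<in> Gs" for G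
  proof -
    have "\<forall>K\<in>G. closed K" "\<forall>K\<in>G. convex K" using that cc by (auto simp: Gs_def)
    then show "closed (C G)" "convex (C G)" using cc[OF K0]
      by (auto simp: C_def intro!: closed_Int closed_Inter convex_Int convex_Inter)
    show "C G \<noteq> {}" using fin that by (auto simp: C_def Gs_def)
  qed
  have pin: "proj (C G) 0 \<in> C G" if "G \<in> Gs" for G using proj_props(1)[OF Ccl[OF that]] .
  obtain Bd where Bd: "\<And>x. x \<in> K0 \<Longrightarrow> norm x \<le> Bd" using bK0 by (meson bounded_iff)
  have mB: "m G \<le> Bd" if "G \<in> Gs" for G using pin[OF that] Bd by (auto simp: m_def C_def)
  have mmono: "m G \<le> norm x" if "G \<in> Gs" "x \<in> C G" for G x
    using proj_props(2)[OF Ccl[OF that(1)], of 0] that(2) by (auto simp: m_def)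
  have Csub: "C G' \<subseteq> C G" if "G \<subseteq> G'" for G G' using that by (auto simp: C_def)
  have bdd: "bdd_above (m ` Gs)" using mB by (auto simp: bdd_above_def)
  have Gsne: "{} \<in> Gs" by (simp add: Gs_def)
  define d where "d = (SUP G\<in>Gs. m G)"
  have md: "m G \<le> d" if "G \<in> Gs" for G using cSUP_upper[OF that bdd] by (simp add: d_def)
  have d0: "0 \<le> d" using md[OF Gsne] unfolding m_def by (meson norm_ge_zero order_trans)
  have "\<exists>G\<in>Gs. d - 1 / real (Suc n) < m G" for n
  proof -
    have "d - 1 / real (Suc n) < d" by simp
    moreover have "Gs \<noteq> {}" using Gsne by blast
    ultimately show ?thesis using less_cSUP_iff[of Gs m "d - 1 / real (Suc n)"] bdd by (simp add: d_def)
  qed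
  then obtain F where FG: "\<And>n. F n \<in> Gs" and Fm: "\<And>n. d - 1 / real (Suc n) < m (F n)" by metis
  define H where "H n = \<Union>(F ` {..n})" for n
  have HG: "H n \<in> Gs" for n using FG by (auto simp: H_def Gs_def)
  have Hmono: "H n \<subseteq> H k" if "n \<le> k" for n k using that by (force simp: H_def)
  have FH: "F n \<subseteq> H n" for n by (auto simp: H_def)
  define p where "p n = proj (C (H n)) 0" for n
  have pC: "p n \<in> C (H n)" for n using pin[OF HG] by (simp add: p_def)
  have pbig: "d - 1 / real (Suc n) < norm (p n)" for n
  proof -
    have "p n \<in> C (F n)" using pC Csub[OF FH] by blast
    then have "m (F n) \<le> norm (p n)" using mmono[OF FG] by blast
    then show ?thesis using Fm[of n] by linarith
  qed
  have common: "(norm (proj (C G) 0 - p n))^2 \<le> 2 * d * (1 / real (Suc n))"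
    if "G \<in> Gs" "H n \<subseteq> G" for G n
  proof -
    let ?x = "proj (C G) 0"
    have xC: "?x \<in> C (H n)" using pin[OF that(1)] Csub[OF that(2)] by blast
    have "(norm (?x - p n))^2 \<le> (norm ?x)^2 - (norm (p n))^2"
      unfolding p_def by (rule proj_min_norm_sq[OF Ccl(1,2)[OF HG] xC])
    also have "\<dots> \<le> d^2 - (norm (p n))^2"
    proof -
      have "norm ?x \<le> d" using md[OF that(1)] by (simp add: m_def)
      then have "(norm ?x)^2 \<le> d^2" by (intro power_mono) auto
      then show ?thesis by simp
    qed
    also have "\<dots> = (d - norm (p n)) * (d + norm (p n))" by (simp add: power2_eq_square algebra_simps)
    also have "\<dots> \<le> (1 / real (Suc n)) * (2 * d)"
    proof (rule mult_mono)
      show "d - norm (p n) \<le> 1 / real (Suc n)" using pbig[of n] by linarith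
      have "norm (p n) \<le> d" using md[OF HG[of n]] by (simp add: m_def p_def)
      then show "d + norm (p n) \<le> 2 * d" by simp
      show "0 \<le> 1 / real (Suc n)" by simp
      show "0 \<le> d + norm (p n)" using d0 by simp
    qed
    finally show ?thesis by (simp add: algebra_simps)
  qed
  have small: "\<exists>N. \<forall>n\<ge>N. 2 * d * (1 / real (Suc n)) < e^2" if e: "e > 0" for e :: real
  proof -
    obtain N :: nat where N: "2 * d / e^2 < real N" using reals_Archimedean2 by blast
    have "2 * d * (1 / real (Suc n)) < e^2" if "N \<le> n" for n
    proof -
      have "2 * d < e^2 * real (Suc n)"
      proof -
        have "2 * d < e^2 * real N" using N e by (simp add: field_simps)
        also have "\<dots> \<le> e^2 * real (Suc n)" using that by (intro mult_left_mono) auto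
        finally show ?thesis .
      qed
      then show ?thesis by (simp add: field_simps)
    qed
    then show ?thesis by blast
  qed
  have sq_lt: "norm v < e" if "(norm v)^2 \<le> r" "r < e^2" "e > 0" for v :: 'a and r e
  proof -
    have "(norm v)^2 < e^2" using that by linarith
    then show ?thesis using that(3) by (smt (verit) power_mono norm_ge_zero)
  qed
  have "Cauchy p"
  proof (rule CauchyI)
    fix e :: real assume e: "0 < e"
    obtain N where N: "\<And>n. N \<le> n \<Longrightarrow> 2 * d * (1 / real (Suc n)) < (e/2)^2"
      using small[of "e/2"] e by auto
    have cl: "norm (p k - p N) < e/2" if "N \<le> k" for k
    proof -
      have "(norm (p k - p N))^2 \<le> 2 * d * (1 / real (Suc N))"
        using common[OF HG Hmono[OF that]] by (simp add: p_def)
      then show ?thesis using N[of N] e sq_lt[of "p k - p N" _ "e/2"] by auto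
    qed
    show "\<exists>M. \<forall>m\<ge>M. \<forall>n\<ge>M. norm (p m - p n) < e"
    proof (intro exI allI impI)
      fix k l assume "N \<le> k" "N \<le> l"
      then have "norm (p k - p N) < e/2" "norm (p l - p N) < e/2" using cl by auto
      then show "norm (p k - p l) < e" using norm_triangle_lt[of "p k - p N" "p N - p l" e]
        by (simp add: norm_minus_commute)
    qed
  qed
  then obtain x where lim: "p \<longlonglongrightarrow> x" using Cauchy_convergent_iff convergent_def by blast
  have "x \<in> K" if K: "K \<in> FF" for K
  proof -
    have "x \<in> closure K"
      unfolding closure_approachable
    proof (intro allI impI)
      fix e :: real assume e: "0 < e"
      obtain N1 where N1: "\<And>n. N1 \<le> n \<Longrightarrow> 2 * d * (1 / real (Suc n)) < (e/2)^2"
        using small[of "e/2"] e by auto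
      obtain N2 where N2: "\<And>n. N2 \<le> n \<Longrightarrow> dist (p n) x < e/2"
        using lim e unfolding LIMSEQ_def by (meson half_gt_zero)
      let ?n = "max N1 N2"
      let ?G = "insert K (H ?n)"
      have GG: "?G \<in> Gs" using HG[of ?n] K by (auto simp: Gs_def)
      have "norm (proj (C ?G) 0 - p ?n) < e/2"
        using common[OF GG, of ?n] N1[of ?n] e sq_lt[of "proj (C ?G) 0 - p ?n" _ "e/2"] by auto
      moreover have "dist (p ?n) x < e/2" using N2 by auto
      ultimately have "dist (proj (C ?G) 0) x < e"
        using dist_triangle[of "proj (C ?G) 0" x "p ?n"] by (simp add: dist_norm)
      moreover have "proj (C ?G) 0 \<in> K" using pin[OF GG] by (auto simp: C_def)
      ultimately show "\<exists>y\<in>K. dist y x < e" by blast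
    qed
    then show ?thesis using cc[OF K] by simp
  qed
  then show ?thesis by blast
qed

lemma maxsq_ineq:
  fixes h \<delta> :: real
  shows "(max 0 (h + \<delta>))^2 \<le> (max 0 h)^2 + 2 * max 0 h * \<delta> + \<delta>^2"
proof (cases "h \<le> 0")
  case True
  then show ?thesis
    by (cases "h + \<delta> \<le> 0") (auto simp: max_def power2_eq_square intro: mult_mono)
next
  case False
  then have "(max 0 (h + \<delta>))^2 \<le> (h + \<delta>)^2"
    by (cases "h + \<delta> \<le> 0") (auto simp: max_def)
  then show ?thesis using False by (simp add: power2_eq_square algebra_simps)
qed

lemma norm_diff_scale_sq:
  fixes a b :: "'a::real_inner"
  shows "(norm (a - t *\<^sub>R b))^2 = (norm a)^2 - 2 * t * inner b a + t^2 * (norm b)^2"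
  unfolding power2_norm_eq_inner by (simp add: inner_diff inner_commute algebra_simps power2_eq_square)

lemma weighted_sum_inner:
  fixes F :: "('a::real_inner \<times> 'a) set" and \<mu> :: "'a \<times> 'a \<Rightarrow> real"
  shows "(\<Sum>f\<in>F. \<mu> f * inner (fst f - z) (snd f + z)) =
     (\<Sum>f\<in>F. \<mu> f * inner (fst f) (snd f)) + inner (\<Sum>f\<in>F. \<mu> f *\<^sub>R fst f) z
     - inner z (\<Sum>f\<in>F. \<mu> f *\<^sub>R snd f) - (\<Sum>f\<in>F. \<mu> f) * inner z z"
proof -
  have "\<mu> f * inner (fst f - z) (snd f + z) =
    \<mu> f * inner (fst f) (snd f) + inner (\<mu> f *\<^sub>R fst f) z - inner z (\<mu> f *\<^sub>R snd f) - \<mu> f * inner z z" for f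
    by (simp add: inner_diff_left inner_add_right algebra_simps inner_commute)
  then have "(\<Sum>f\<in>F. \<mu> f * inner (fst f - z) (snd f + z)) =
    (\<Sum>f\<in>F. \<mu> f * inner (fst f) (snd f) + inner (\<mu> f *\<^sub>R fst f) z - inner z (\<mu> f *\<^sub>R snd f) - \<mu> f * inner z z)"
    by simp
  also have "\<dots> = (\<Sum>f\<in>F. \<mu> f * inner (fst f) (snd f)) + inner (\<Sum>f\<in>F. \<mu> f *\<^sub>R fst f) z
     - inner z (\<Sum>f\<in>F. \<mu> f *\<^sub>R snd f) - (\<Sum>f\<in>F. \<mu> f) * inner z z"
    by (simp add: sum.distrib sum_subtractf inner_sum_left inner_sum_right sum_distrib_right)
  finally show ?thesis .
qed

lemma double_sum_mono:
  fixes F :: "('a::real_inner \<times> 'a) set" and \<mu> :: "'a \<times> 'a \<Rightarrow> real"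
  shows "(\<Sum>f\<in>F. \<Sum>g\<in>F. \<mu> f * \<mu> g * inner (fst f - fst g) (snd f - snd g)) =
    2 * ((\<Sum>f\<in>F. \<mu> f) * (\<Sum>f\<in>F. \<mu> f * inner (fst f) (snd f))
       - inner (\<Sum>f\<in>F. \<mu> f *\<^sub>R fst f) (\<Sum>f\<in>F. \<mu> f *\<^sub>R snd f))"
proof -
  have e: "\<mu> f * \<mu> g * inner (fst f - fst g) (snd f - snd g) =
     \<mu> g * (\<mu> f * inner (fst f) (snd f)) + \<mu> f * (\<mu> g * inner (fst g) (snd g))
     - inner (\<mu> f *\<^sub>R fst f) (\<mu> g *\<^sub>R snd g) - inner (\<mu> g *\<^sub>R fst g) (\<mu> f *\<^sub>R snd f)" for f g
    by (simp add: inner_diff_left inner_diff_right algebra_simps)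
  have "(\<Sum>f\<in>F. \<Sum>g\<in>F. \<mu> f * \<mu> g * inner (fst f - fst g) (snd f - snd g)) =
     (\<Sum>f\<in>F. \<Sum>g\<in>F. \<mu> g * (\<mu> f * inner (fst f) (snd f))) + (\<Sum>f\<in>F. \<Sum>g\<in>F. \<mu> f * (\<mu> g * inner (fst g) (snd g)))
     - (\<Sum>f\<in>F. \<Sum>g\<in>F. inner (\<mu> f *\<^sub>R fst f) (\<mu> g *\<^sub>R snd g)) - (\<Sum>f\<in>F. \<Sum>g\<in>F. inner (\<mu> g *\<^sub>R fst g) (\<mu> f *\<^sub>R snd f))"
    unfolding e by (simp add: sum.distrib sum_subtractf)
  also have "\<dots> = 2 * ((\<Sum>f\<in>F. \<mu> f) * (\<Sum>f\<in>F. \<mu> f * inner (fst f) (snd f))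
       - inner (\<Sum>f\<in>F. \<mu> f *\<^sub>R fst f) (\<Sum>f\<in>F. \<mu> f *\<^sub>R snd f))"
  proof -
    have 1: "(\<Sum>f\<in>F. \<Sum>g\<in>F. \<mu> g * (\<mu> f * inner (fst f) (snd f))) = (\<Sum>f\<in>F. \<mu> f) * (\<Sum>f\<in>F. \<mu> f * inner (fst f) (snd f))"
      by (simp add: sum_distrib_left sum_distrib_right[symmetric] mult.commute)
    have 2: "(\<Sum>f\<in>F. \<Sum>g\<in>F. \<mu> f * (\<mu> g * inner (fst g) (snd g))) = (\<Sum>f\<in>F. \<mu> f) * (\<Sum>f\<in>F. \<mu> f * inner (fst f) (snd f))"
      by (subst sum.swap) (simp add: sum_distrib_left sum_distrib_right[symmetric] mult.commute)
    have 3: "(\<Sum>f\<in>F. \<Sum>g\<in>F. inner (\<mu> f *\<^sub>R fst f) (\<mu> g *\<^sub>R snd g)) = inner (\<Sum>f\<in>F. \<mu> f *\<^sub>R fst f) (\<Sum>f\<in>F. \<mu> f *\<^sub>R snd f)"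
      by (subst sum.swap) (simp only: inner_sum_left inner_sum_right)
    have 4: "(\<Sum>f\<in>F. \<Sum>g\<in>F. inner (\<mu> g *\<^sub>R fst g) (\<mu> f *\<^sub>R snd f)) = inner (\<Sum>f\<in>F. \<mu> f *\<^sub>R fst f) (\<Sum>f\<in>F. \<mu> f *\<^sub>R snd f)"
      by (simp only: inner_sum_left inner_sum_right)
    show ?thesis unfolding 1 2 3 4 by simp
  qed
  finally show ?thesis .
qed

lemma finite_minty:
  fixes F :: "('a::{real_inner,complete_space} \<times> 'a) set"
  assumes fin: "finite F"
    and mono: "\<And>f g. f \<in> F \<Longrightarrow> g \<in> F \<Longrightarrow> inner (fst f - fst g) (snd f - snd g) \<ge> 0"
  shows "\<exists>z. \<forall>f\<in>F. inner (fst f - z) (snd f + z) \<ge> 0"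
proof (cases "F = {}")
  case True then show ?thesis by auto
next
  case False
  define c where "c f = (1/2) *\<^sub>R (fst f - snd f)" for f :: "'a \<times> 'a"
  define r where "r f = (norm (fst f + snd f))^2 / 4" for f :: "'a \<times> 'a"
  define h where "h f z = - inner (fst f - z) (snd f + z)" for f :: "'a \<times> 'a" and z :: 'a
  have heq: "h f z = (norm (z - c f))^2 - r f" for f :: "'a \<times> 'a" and z :: 'a
    unfolding h_def c_def r_def
    by (simp add: power2_norm_eq_inner inner_diff inner_add algebra_simps inner_commute)
  define \<psi> where "\<psi> z = (\<Sum>f\<in>F. (max 0 (h f z))^2)" for z
  define K where "K = convex hull (c ` F)"
  have Kc: "compact K" "closed K" "convex K" "K \<noteq> {}"
    using finite_imp_compact_convex_hull[of "c ` F"] fin False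
    by (auto simp: K_def compact_imp_closed)
  have cont: "continuous_on K \<psi>" unfolding \<psi>_def h_def by (intro continuous_intros)
  obtain z0 where z0K: "z0 \<in> K" and z0min: "\<And>y. y \<in> K \<Longrightarrow> \<psi> z0 \<le> \<psi> y"
    using continuous_attains_inf[OF Kc(1) Kc(4) cont] by blast
  have hproj: "h f (proj K z) \<le> h f z" if "f \<in> F" for f z
  proof -
    have "c f \<in> K" using that by (simp add: K_def hull_inc)
    then have "norm (proj K z - c f) \<le> norm (z - c f)" by (rule proj_nonexpand_to[OF Kc(2,3)])
    then have "(norm (proj K z - c f))^2 \<le> (norm (z - c f))^2" by (intro power_mono) auto
    then show ?thesis by (simp add: heq)
  qed
  have glob: "\<psi> z0 \<le> \<psi> z" for z
  proof -
    have "proj K z \<in> K" using proj_props(1)[OF Kc(2,3,4)] .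
    then have "\<psi> z0 \<le> \<psi> (proj K z)" by (rule z0min)
    also have "\<dots> \<le> \<psi> z" unfolding \<psi>_def
    proof (rule sum_mono)
      fix f assume "f \<in> F"
      then have "max 0 (h f (proj K z)) \<le> max 0 (h f z)" using hproj by (simp add: max.coboundedI2)
      then show "(max 0 (h f (proj K z)))^2 \<le> (max 0 (h f z))^2" by (intro power_mono) auto
    qed
    finally show ?thesis .
  qed
  define \<mu> where "\<mu> f = max 0 (h f z0)" for f :: "'a \<times> 'a"
  have \<mu>0: "\<mu> f \<ge> 0" for f by (simp add: \<mu>_def)
  define w where "w = (\<Sum>f\<in>F. \<mu> f *\<^sub>R (z0 - c f))"
  define M where "M = (\<Sum>f\<in>F. \<mu> f)"
  have M0: "M \<ge> 0" unfolding M_def by (intro sum_nonneg \<mu>0)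
  have w0: "w = 0"
  proof (rule ccontr)
    assume wne: "w \<noteq> 0"
    define W where "W = (norm w)^2"
    have W0: "W > 0" using wne by (simp add: W_def)
    define \<alpha> where "\<alpha> f = inner w (z0 - c f)" for f :: "'a \<times> 'a"
    have s\<alpha>: "(\<Sum>f\<in>F. \<mu> f * \<alpha> f) = W"
    proof -
      have "(\<Sum>f\<in>F. \<mu> f * \<alpha> f) = inner w w"
        by (simp add: \<alpha>_def w_def inner_sum_right)
      then show ?thesis by (simp add: W_def power2_norm_eq_inner)
    qed
    define Q where "Q = (\<Sum>f\<in>F. (2 * \<bar>\<alpha> f\<bar> + W)^2)"
    have Q0: "Q \<ge> 0" unfolding Q_def by (intro sum_nonneg) auto
    define C where "C = 2 * W * M + Q"
    have C0: "C \<ge> 0" using W0 M0 Q0 by (simp add: C_def)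
    define t where "t = W / (C + W)"
    have t0: "t > 0" and t1: "t \<le> 1" using W0 C0 by (auto simp: t_def field_simps)
    have tC: "t * C \<le> W"
    proof -
      have "t * C = W * (C / (C + W))" by (simp add: t_def)
      also have "\<dots> \<le> W * 1" using W0 C0 by (intro mult_left_mono) (auto simp: field_simps)
      finally show ?thesis by simp
    qed
    define \<delta> where "\<delta> f = - 2 * t * \<alpha> f + t^2 * W" for f :: "'a \<times> 'a"
    have hstep: "h f (z0 - t *\<^sub>R w) = h f z0 + \<delta> f" for f
    proof -
      have "(norm (z0 - t *\<^sub>R w - c f))^2 = (norm (z0 - c f))^2 - 2 * t * \<alpha> f + t^2 * W"
      proof -
        have eq: "z0 - t *\<^sub>R w - c f = (z0 - c f) - t *\<^sub>R w" by (simp add: algebra_simps)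
        show ?thesis unfolding \<alpha>_def W_def eq by (rule norm_diff_scale_sq)
      qed
      then show ?thesis by (simp add: heq \<delta>_def)
    qed
    have dbound: "(\<delta> f)^2 \<le> t^2 * (2 * \<bar>\<alpha> f\<bar> + W)^2" for f
    proof -
      have "\<bar>\<delta> f\<bar> \<le> 2 * t * \<bar>\<alpha> f\<bar> + t^2 * W"
      proof -
        have e1: "\<bar>2*t*\<alpha> f\<bar> = 2*t*\<bar>\<alpha> f\<bar>" using t0 by (simp add: abs_mult)
        have e2: "t^2*W \<ge> 0" using W0 by simp
        have g: "\<bar>- a + b\<bar> \<le> \<bar>a\<bar> + b" if "b \<ge> 0" for a b :: real using that by arith
        have "- 2 * t * \<alpha> f = - (2 * t * \<alpha> f)" by simp
        then show ?thesis unfolding \<delta>_def using g[OF e2, of "2 * t * \<alpha> f"] e1 by simp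
      qed
      also have "\<dots> \<le> t * (2 * \<bar>\<alpha> f\<bar> + W)"
      proof -
        have "t^2 * W \<le> t * W" using t0 t1 W0 by (simp add: power2_eq_square)
        then show ?thesis by (simp add: algebra_simps)
      qed
      finally have "\<bar>\<delta> f\<bar> \<le> t * (2 * \<bar>\<alpha> f\<bar> + W)" .
      then have "\<bar>\<delta> f\<bar>^2 \<le> (t * (2 * \<bar>\<alpha> f\<bar> + W))^2" by (intro power_mono) auto
      then show ?thesis by (simp add: power_mult_distrib)
    qed
    have step1: "\<psi> (z0 - t *\<^sub>R w) \<le> (\<Sum>f\<in>F. (\<mu> f)^2 + 2 * \<mu> f * \<delta> f + (\<delta> f)^2)"
      unfolding \<psi>_def hstep \<mu>_def by (rule sum_mono) (rule maxsq_ineq)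
    have step2: "(\<Sum>f\<in>F. (\<mu> f)^2 + 2 * \<mu> f * \<delta> f + (\<delta> f)^2) \<le> (\<Sum>f\<in>F. (\<mu> f)^2 + 2 * \<mu> f * \<delta> f + t^2 * (2 * \<bar>\<alpha> f\<bar> + W)^2)"
      by (rule sum_mono) (rule add_left_mono, rule dbound)
    have sumeq: "(\<Sum>f\<in>F. (\<mu> f)^2 + 2 * \<mu> f * \<delta> f + t^2 * (2 * \<bar>\<alpha> f\<bar> + W)^2)
          = (\<Sum>f\<in>F. (\<mu> f)^2) - 4 * t * (\<Sum>f\<in>F. \<mu> f * \<alpha> f) + 2 * t^2 * W * (\<Sum>f\<in>F. \<mu> f)
            + t^2 * (\<Sum>f\<in>F. (2 * \<bar>\<alpha> f\<bar> + W)^2)"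
      by (simp add: \<delta>_def sum.distrib sum_subtractf sum_distrib_left sum_distrib_right algebra_simps)
    have psiz0: "\<psi> z0 = (\<Sum>f\<in>F. (\<mu> f)^2)" by (simp add: \<psi>_def \<mu>_def)
    have fin1: "\<psi> (z0 - t *\<^sub>R w) \<le> \<psi> z0 - 4 * t * W + t^2 * C"
    proof -
      have "\<psi> (z0 - t *\<^sub>R w) \<le> \<psi> z0 - 4 * t * W + 2 * t^2 * W * M + t^2 * Q"
        using step1 step2 sumeq unfolding s\<alpha> M_def[symmetric] Q_def[symmetric] psiz0[symmetric] by linarith
      then show ?thesis by (simp add: C_def algebra_simps)
    qed
    have fin2: "\<psi> z0 - 4 * t * W + t^2 * C < \<psi> z0"
    proof -
      have "t^2 * C \<le> t * W" using tC t0 by (simp add: power2_eq_square mult.assoc mult_left_mono)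
      moreover have "t * W > 0" using t0 W0 by simp
      ultimately show ?thesis by linarith
    qed
    show False using fin1 fin2 glob[of "z0 - t *\<^sub>R w"] by linarith
  qed
  define Sa where "Sa = (\<Sum>f\<in>F. \<mu> f *\<^sub>R fst f)"
  define Ss where "Ss = (\<Sum>f\<in>F. \<mu> f *\<^sub>R snd f)"
  define P where "P = (\<Sum>f\<in>F. \<mu> f * inner (fst f) (snd f))"
  have Mz: "M *\<^sub>R z0 = (1/2) *\<^sub>R (Sa - Ss)"
  proof -
    have "w = M *\<^sub>R z0 - (\<Sum>f\<in>F. \<mu> f *\<^sub>R c f)"
      by (simp add: w_def M_def scaleR_diff_right sum_subtractf scaleR_sum_left)
    moreover have "(\<Sum>f\<in>F. \<mu> f *\<^sub>R c f) = (1/2) *\<^sub>R (Sa - Ss)"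
      by (simp add: c_def Sa_def Ss_def scaleR_diff_right sum_subtractf scaleR_sum_right)
    ultimately show ?thesis using w0 by simp
  qed
  define T where "T = (\<Sum>f\<in>F. \<mu> f * inner (fst f - z0) (snd f + z0))"
  have TP: "T = P + M * inner z0 z0"
  proof -
    have t1: "T = P + inner Sa z0 - inner z0 Ss - M * inner z0 z0"
      unfolding T_def P_def Sa_def Ss_def M_def by (rule weighted_sum_inner)
    have t2: "inner Sa z0 - inner z0 Ss = inner (Sa - Ss) z0" by (simp add: inner_diff_left inner_commute[of z0])
    have t3: "inner (Sa - Ss) z0 = 2 * inner (M *\<^sub>R z0) z0"
    proof -
      have "Sa - Ss = 2 *\<^sub>R (M *\<^sub>R z0)" using Mz by simp
      then show ?thesis by simp
    qed
    show ?thesis using t1 t2 t3 by simp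
  qed
  have dsum: "0 \<le> M * P - inner Sa Ss"
  proof -
    have "0 \<le> (\<Sum>f\<in>F. \<Sum>g\<in>F. \<mu> f * \<mu> g * inner (fst f - fst g) (snd f - snd g))"
      using mono \<mu>0 by (intro sum_nonneg) auto
    then show ?thesis unfolding double_sum_mono M_def P_def Sa_def Ss_def by simp
  qed
  have T0: "T \<ge> 0"
  proof (cases "M = 0")
    case True
    then have "\<forall>f\<in>F. \<mu> f = 0" using sum_nonneg_eq_0_iff[OF fin, of \<mu>] \<mu>0 by (simp add: M_def)
    then show ?thesis by (simp add: T_def)
  next
    case Mpos: False
    then have Mp: "M > 0" using M0 by simp
    have "M * T = M * P + inner (M *\<^sub>R z0) (M *\<^sub>R z0)" by (simp add: TP algebra_simps)
    also have "inner (M *\<^sub>R z0) (M *\<^sub>R z0) = (1/4) * inner (Sa - Ss) (Sa - Ss)" by (simp add: Mz)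
    finally have "M * T = M * P + (1/4) * inner (Sa - Ss) (Sa - Ss)" .
    moreover have "(1/4) * inner (Sa - Ss) (Sa - Ss) + inner Sa Ss = (1/4) * inner (Sa + Ss) (Sa + Ss)"
      by (simp add: inner_diff inner_add algebra_simps inner_commute)
    moreover have "inner (Sa + Ss) (Sa + Ss) \<ge> 0" by simp
    ultimately have "M * T \<ge> 0" using dsum by linarith
    then show ?thesis using Mp by (simp add: zero_le_mult_iff)
  qed
  have "(\<Sum>f\<in>F. (\<mu> f)^2) = - T"
  proof -
    have "(\<mu> f)^2 = - (\<mu> f * inner (fst f - z0) (snd f + z0))" for f
      unfolding \<mu>_def h_def by (simp add: max_def power2_eq_square)
    then show ?thesis by (simp add: T_def sum_negf)
  qed
  then have "(\<Sum>f\<in>F. (\<mu> f)^2) = 0" using T0 sum_nonneg[of F "\<lambda>f. (\<mu> f)^2"] by simp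
  then have "\<forall>f\<in>F. (\<mu> f)^2 = 0" using sum_nonneg_eq_0_iff[OF fin, of "\<lambda>f. (\<mu> f)^2"] by simp
  then have "\<forall>f\<in>F. h f z0 \<le> 0" by (simp add: \<mu>_def max_def split: if_splits) (metis linorder_le_cases order_refl)
  then show ?thesis by (auto simp: h_def)
qed

lemma ball_identity:
  fixes p q u :: "'a::real_inner"
  shows "inner (p - u) (q + u) = (norm (p + q))^2 / 4 - (norm (u - (1/2) *\<^sub>R (p - q)))^2"
proof -
  have "(norm (u - (1/2) *\<^sub>R (p - q)))^2 = inner u u - inner u p + inner u q + (inner p p - 2 * inner p q + inner q q) / 4"
    unfolding power2_norm_eq_inner by (simp add: inner_diff inner_add inner_commute algebra_simps diff_divide_distrib add_divide_distrib)
  moreover have "(norm (p + q))^2 = inner p p + 2 * inner p q + inner q q"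
    unfolding power2_norm_eq_inner by (simp add: inner_add inner_commute)
  moreover have "inner (p - u) (q + u) = inner p q + inner p u - inner u q - inner u u"
    by (simp add: inner_diff inner_add inner_commute)
  ultimately show ?thesis by (simp add: inner_commute diff_divide_distrib add_divide_distrib)
qed
lemma ball_set_eq:
  fixes p q :: "'a::real_inner"
  shows "{u. inner (p - u) (q + u) \<ge> 0} = cball ((1/2) *\<^sub>R (p - q)) (norm (p + q) / 2)"
proof -
  have "inner (p - u) (q + u) \<ge> 0 \<longleftrightarrow> dist ((1/2) *\<^sub>R (p - q)) u \<le> norm (p + q) / 2" for u
  proof -
    define n where "n = norm (u - (1/2) *\<^sub>R (p - q))"
    define r where "r = norm (p + q) / 2"
    have n0: "n \<ge> 0" and r0: "r \<ge> 0" by (simp_all add: n_def r_def)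
    have "inner (p - u) (q + u) = r^2 - n^2"
      unfolding ball_identity n_def r_def by (simp add: power_divide)
    moreover have "n^2 \<le> r^2 \<longleftrightarrow> n \<le> r"
      using power2_le_iff_abs_le[OF r0, of n] n0 by simp
    moreover have "dist ((1/2) *\<^sub>R (p - q)) u = n" by (simp add: n_def dist_norm norm_minus_commute)
    ultimately show ?thesis by (simp add: r_def)
  qed
  then show ?thesis unfolding cball_def by blast
qed

lemma mono_set_ball:
  fixes P :: "('a::{real_inner,complete_space} \<times> 'a) set"
  assumes ne: "P \<noteq> {}"
    and mono: "\<And>f g. f \<in> P \<Longrightarrow> g \<in> P \<Longrightarrow> inner (fst f - fst g) (snd f - snd g) \<ge> 0"
  shows "\<exists>u. \<forall>f\<in>P. inner (fst f - u) (snd f + u) \<ge> 0"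
proof -
  define bl where "bl f = {u. inner (fst f - u) (snd f + u) \<ge> 0}" for f :: "'a \<times> 'a"
  have bc: "bl f = cball ((1/2) *\<^sub>R (fst f - snd f)) (norm (fst f + snd f) / 2)" for f
    unfolding bl_def by (rule ball_set_eq)
  obtain f0 where f0: "f0 \<in> P" using ne by blast
  have "\<Inter>(bl ` P) \<noteq> {}"
  proof (rule fip_hilbert[of "bl ` P" "bl f0"])
    show "closed K \<and> convex K" if "K \<in> bl ` P" for K using that by (auto simp: bc)
    show "bl f0 \<in> bl ` P" using f0 by blast
    show "bounded (bl f0)" by (simp add: bc)
    show "bl f0 \<inter> \<Inter>G \<noteq> {}" if "finite G" "G \<subseteq> bl ` P" for G
    proof -
      from finite_subset_image[OF that(1) that(2)]
      obtain P' where P': "P' \<subseteq> P" "finite P'" "G = bl ` P'" by (elim exE conjE)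
      have "\<exists>z. \<forall>f\<in>insert f0 P'. inner (fst f - z) (snd f + z) \<ge> 0"
      proof (rule finite_minty)
        show "finite (insert f0 P')" using P' by simp
        show "inner (fst f - fst g) (snd f - snd g) \<ge> 0" if "f \<in> insert f0 P'" "g \<in> insert f0 P'" for f g
          using that P'(1) f0 by (intro mono) auto
      qed
      then obtain z where "\<forall>f\<in>insert f0 P'. inner (fst f - z) (snd f + z) \<ge> 0" by blast
      then have "z \<in> bl f0 \<inter> \<Inter>G" using P' by (auto simp: bl_def)
      then show ?thesis by blast
    qed
  qed
  then show ?thesis by (auto simp: bl_def)
qed

lemma max_mono_nonempty:
  assumes "max_mono (A :: ('a::real_inner) operator)"
  shows "A \<noteq> {}"
proof
  assume A: "A = {}"
  have "mono_op {(0::'a, 0::'a)}" by (simp add: mono_op_def)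
  then have "{(0::'a, 0::'a)} = A" using assms A unfolding max_mono_def by blast
  then show False using A by simp
qed

lemma max_mono_insert:
  assumes mm: "max_mono (A :: ('a::real_inner) operator)"
    and h: "\<And>a b. (a, b) \<in> A \<Longrightarrow> inner (a - z) (b - w) \<ge> 0"
  shows "(z, w) \<in> A"
proof -
  have m: "mono_op A" using mm by (simp add: max_mono_def)
  have "mono_op (insert (z, w) A)"
    unfolding mono_op_def
  proof (intro allI impI)
    fix x u y v assume 1: "(x, u) \<in> insert (z, w) A" and 2: "(y, v) \<in> insert (z, w) A"
    show "0 \<le> inner (x - y) (u - v)"
    proof (cases "(x, u) = (z, w)")
      case True
      show ?thesis
      proof (cases "(y, v) = (z, w)")
        case True then show ?thesis using \<open>(x, u) = (z, w)\<close> by simp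
      next
        case False
        then have "(y, v) \<in> A" using 2 by auto
        from h[OF this] have "0 \<le> inner (y - z) (v - w)" .
        also have "inner (y - z) (v - w) = inner (z - y) (w - v)"
          by (metis inner_minus_left inner_minus_right minus_diff_eq minus_minus)
        finally show ?thesis using True by simp
      qed
    next
      case False
      then have xA: "(x, u) \<in> A" using 1 by auto
      show ?thesis
      proof (cases "(y, v) = (z, w)")
        case True then show ?thesis using h[OF xA] by simp
      next
        case False
        then have "(y, v) \<in> A" using 2 by auto
        then show ?thesis using m xA unfolding mono_op_def by blast
      qed
    qed
  qed
  then have "insert (z, w) A = A" using mm unfolding max_mono_def by blast
  then show ?thesis by blast
qed

lemma minty:
  fixes A :: "('a::{real_inner,complete_space}) operator"
  assumes mm: "max_mono A" and c: "c > 0"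
  shows "\<exists>y. (y, x - c *\<^sub>R y) \<in> A"
proof -
  have m: "mono_op A" using mm by (simp add: max_mono_def)
  define P where "P = {(c *\<^sub>R a, b - x) | a b. (a, b) \<in> A}"
  have "\<exists>u. \<forall>f\<in>P. inner (fst f - u) (snd f + u) \<ge> 0"
  proof (rule mono_set_ball)
    show "P \<noteq> {}" using max_mono_nonempty[OF mm] by (auto simp: P_def)
    show "inner (fst f - fst g) (snd f - snd g) \<ge> 0" if fP: "f \<in> P" and gP: "g \<in> P" for f g
    proof -
      obtain a b a' b' where ab: "(a, b) \<in> A" "(a', b') \<in> A" and fg: "f = (c *\<^sub>R a, b - x)" "g = (c *\<^sub>R a', b' - x)"
        using fP gP unfolding P_def by blast
      have "inner (a - a') (b - b') \<ge> 0" using m ab unfolding mono_op_def by blast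
      moreover have "c *\<^sub>R a - c *\<^sub>R a' = c *\<^sub>R (a - a')" by (simp add: scaleR_diff_right)
      ultimately show ?thesis using fg c by simp
    qed
  qed
  then obtain u where u: "\<And>f. f \<in> P \<Longrightarrow> inner (fst f - u) (snd f + u) \<ge> 0" by blast
  define z where "z = (1 / c) *\<^sub>R u"
  have uz: "u = c *\<^sub>R z" using c by (simp add: z_def)
  have "(z, x - c *\<^sub>R z) \<in> A"
  proof (rule max_mono_insert[OF mm])
    fix a b assume ab: "(a, b) \<in> A"
    then have "(c *\<^sub>R a, b - x) \<in> P" by (force simp: P_def)
    from u[OF this] have "inner (c *\<^sub>R a - u) (b - x + u) \<ge> 0" by simp
    also have "inner (c *\<^sub>R a - u) (b - x + u) = c * inner (a - z) (b - (x - c *\<^sub>R z))"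
    proof -
      have "c *\<^sub>R a - u = c *\<^sub>R (a - z)" by (simp add: uz scaleR_diff_right)
      moreover have "b - x + u = b - (x - c *\<^sub>R z)" by (simp add: uz)
      ultimately show ?thesis by (metis inner_scaleR_left)
    qed
    finally have "0 \<le> c * inner (a - z) (b - (x - c *\<^sub>R z))" .
    then show "inner (a - z) (b - (x - c *\<^sub>R z)) \<ge> 0" using c
      by (metis less_eq_real_def mult_le_cancel_left_pos mult_zero_right)
  qed
  then show ?thesis by blast
qed

lemma small_r:
  fixes K S \<epsilon> :: real
  assumes K: "K \<ge> 0" and S: "S \<ge> 0" and e: "\<epsilon> > 0"
  shows "\<exists>lam>0. \<forall>r\<ge>0. r^2 \<le> lam * (K + S * r) \<longrightarrow> r < \<epsilon>"
proof -
  define L where "L = K / \<epsilon>^2 + S / \<epsilon> + 1"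
  have L1: "L \<ge> 1" using K S e by (simp add: L_def)
  define lam where "lam = 1 / L"
  have lp: "lam > 0" using L1 by (simp add: lam_def)
  have "r < \<epsilon>" if r: "r \<ge> 0" "r^2 \<le> lam * (K + S * r)" for r
  proof (rule ccontr)
    assume "\<not> r < \<epsilon>"
    then have re: "r \<ge> \<epsilon>" by simp
    have "K \<le> K / \<epsilon>^2 * r^2"
    proof -
      have "\<epsilon>^2 \<le> r^2" using re e by (intro power_mono) auto
      then have "1 \<le> r^2 / \<epsilon>^2" using e by simp
      then have "K * 1 \<le> K * (r^2 / \<epsilon>^2)" using K by (intro mult_left_mono) auto
      then show ?thesis by simp
    qed
    moreover have "S * r \<le> S / \<epsilon> * r^2"
    proof -
      have "1 \<le> r / \<epsilon>" using re e by simp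
      then have "S * r * 1 \<le> S * r * (r / \<epsilon>)" using S r by (intro mult_left_mono) auto
      then show ?thesis by (simp add: power2_eq_square)
    qed
    ultimately have "K + S * r \<le> (L - 1) * r^2" by (simp add: L_def algebra_simps)
    then have "lam * (K + S * r) \<le> lam * ((L - 1) * r^2)" using lp by (intro mult_left_mono) auto
    also have "\<dots> = r^2 - r^2 / L" using L1 by (simp add: lam_def field_simps)
    also have "\<dots> < r^2"
    proof -
      have "r > 0" using re e by simp
      then show ?thesis using L1 by simp
    qed
    finally show False using r(2) by simp
  qed
  then show ?thesis using lp by blast
qed

lemma max_mono_converse:
  assumes "max_mono (A :: ('a::real_inner) operator)"
  shows "max_mono (converse A)"
proof -
  have m: "mono_op A" using assms by (simp add: max_mono_def)
  have sym: "mono_op (converse X) \<longleftrightarrow> mono_op X" for X :: "'a operator"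
    unfolding mono_op_def by (auto simp: inner_commute) (metis inner_commute)+
  have "mono_op (converse A)" using m sym by simp
  moreover have "B = converse A" if "mono_op B" "converse A \<subseteq> B" for B
  proof -
    have "mono_op (converse B)" using that(1) sym by simp
    moreover have "A \<subseteq> converse B" using that(2) by auto
    ultimately have "converse B = A" using assms unfolding max_mono_def by blast
    then show ?thesis by auto
  qed
  ultimately show ?thesis unfolding max_mono_def by blast
qed

lemma dom_ran_converse: "dom_op (converse A) = ran_op A" "ran_op (converse A) = dom_op A"
  by (auto simp: dom_op_def ran_op_def)

lemma closure_translate_ext:
  fixes S :: "'a::real_normed_vector set"
  assumes "\<And>c. c \<in> S \<Longrightarrow> c + w \<in> closure S"
  shows "\<And>c. c \<in> closure S \<Longrightarrow> c + w \<in> closure S"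
proof -
  have "(\<lambda>c. c + w) ` closure S \<subseteq> closure S"
    by (rule image_closure_subset) (use assms in \<open>auto intro!: continuous_intros\<close>)
  then show "\<And>c. c \<in> closure S \<Longrightarrow> c + w \<in> closure S" by blast
qed

lemma barrier_rec:
  fixes B :: "('a::{real_inner,complete_space}) operator"
  assumes mm: "max_mono B" and bd: "\<And>b. b \<in> dom_op B \<Longrightarrow> inner w b \<le> M"
  shows "w \<in> rec_cone (closure (ran_op B))"
proof -
  have m: "mono_op B" using mm by (simp add: max_mono_def)
  have step: "c + w \<in> closure (ran_op B)" if cR: "c \<in> ran_op B" for c
  proof -
    obtain b0 where b0: "(b0, c) \<in> B" using cR by (auto simp: ran_op_def)
    show ?thesis unfolding closure_approachable
    proof (intro allI impI)
      fix \<epsilon> :: real assume e: "\<epsilon> > 0"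
      obtain lam where lp: "lam > 0"
        and lr: "\<And>r. r \<ge> 0 \<Longrightarrow> r^2 \<le> lam * (\<bar>M - inner b0 w\<bar> + norm b0 * r) \<Longrightarrow> r < \<epsilon>"
        using small_r[of "\<bar>M - inner b0 w\<bar>" "norm b0" \<epsilon>] e by auto
      obtain y where y: "(y, (c + w) - lam *\<^sub>R y) \<in> B" using minty[OF mm lp] by blast
      define e where "e = lam *\<^sub>R y"
      have "inner (y - b0) (((c + w) - lam *\<^sub>R y) - c) \<ge> 0"
        using m y b0 unfolding mono_op_def by blast
      then have i1: "lam * inner (y - b0) y \<le> inner (y - b0) w"
        by (simp add: inner_diff_right algebra_simps)
      have yd: "y \<in> dom_op B" using y by (auto simp: dom_op_def)
      have "(norm e)^2 = lam * (lam * inner (y - b0) y) + lam * inner b0 e"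
        unfolding e_def power2_norm_eq_inner by (simp add: inner_diff_left algebra_simps)
      also have "\<dots> \<le> lam * inner (y - b0) w + lam * inner b0 e"
        using i1 lp by (intro add_right_mono mult_left_mono) auto
      also have "\<dots> = lam * (inner w y - inner b0 w + inner b0 e)"
        by (simp add: inner_diff_left inner_commute algebra_simps)
      also have "\<dots> \<le> lam * (\<bar>M - inner b0 w\<bar> + norm b0 * norm e)"
      proof -
        have "inner w y \<le> M" using bd[OF yd] .
        moreover have "inner b0 e \<le> norm b0 * norm e" by (rule norm_cauchy_schwarz)
        ultimately have "inner w y - inner b0 w + inner b0 e \<le> \<bar>M - inner b0 w\<bar> + norm b0 * norm e"
          by linarith
        then show ?thesis using lp by (intro mult_left_mono) auto
      qed
      finally have "norm e < \<epsilon>" using lr[of "norm e"] by simp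
      moreover have "(c + w) - e \<in> ran_op B" using y by (auto simp: ran_op_def e_def)
      ultimately show "\<exists>y\<in>ran_op B. dist y (c + w) < \<epsilon>"
        by (intro bexI[of _ "(c + w) - e"]) (auto simp: dist_norm)
    qed
  qed
  then show ?thesis unfolding rec_cone_def using closure_translate_ext[of "ran_op B" w] by blast
qed

lemma hull_in_closure_dom:
  fixes A :: "('a::{real_inner,complete_space}) operator"
  assumes mm: "max_mono A" and x: "x \<in> convex hull (dom_op A)"
  shows "x \<in> closure (dom_op A)"
proof -
  have m: "mono_op A" using mm by (simp add: max_mono_def)
  obtain S u where S: "finite S" "S \<subseteq> dom_op A" and u0: "\<And>v. v \<in> S \<Longrightarrow> 0 \<le> u v"
    and u1: "sum u S = 1" and ux: "(\<Sum>v\<in>S. u v *\<^sub>R v) = x"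
    using x unfolding convex_hull_explicit by blast
  define g where "g v = (SOME b. (v, b) \<in> A)" for v
  have g: "(v, g v) \<in> A" if "v \<in> S" for v
  proof -
    have "\<exists>b. (v, b) \<in> A" using that S(2) by (auto simp: dom_op_def)
    then show ?thesis unfolding g_def by (rule someI_ex)
  qed
  define K where "K = (\<Sum>v\<in>S. u v * \<bar>inner (v - x) (g v)\<bar>)"
  define Sn where "Sn = (\<Sum>v\<in>S. u v * norm (g v))"
  have K0: "K \<ge> 0" unfolding K_def using u0 by (intro sum_nonneg) auto
  have Sn0: "Sn \<ge> 0" unfolding Sn_def using u0 by (intro sum_nonneg) auto
  show ?thesis unfolding closure_approachable
  proof (intro allI impI)
    fix \<epsilon> :: real assume e: "\<epsilon> > 0"
    obtain lam where lp: "lam > 0" and lr: "\<And>r. r \<ge> 0 \<Longrightarrow> r^2 \<le> lam * (K + Sn * r) \<Longrightarrow> r < \<epsilon>"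
      using small_r[OF K0 Sn0 e] by auto
    have cp: "1 / lam > 0" using lp by simp
    obtain y where y: "(y, (1 / lam) *\<^sub>R x - (1 / lam) *\<^sub>R y) \<in> A" using minty[OF mm cp] by blast
    have trm: "inner (v - y) (x - y) \<le> lam * (\<bar>inner (v - x) (g v)\<bar> + norm (g v) * norm (x - y))"
      if v: "v \<in> S" for v
    proof -
      have "inner (y - v) (((1 / lam) *\<^sub>R x - (1 / lam) *\<^sub>R y) - g v) \<ge> 0"
        using m y g[OF v] unfolding mono_op_def by blast
      then have "inner (y - v) ((1 / lam) *\<^sub>R (x - y)) \<ge> inner (y - v) (g v)"
        by (simp add: inner_diff_right scaleR_diff_right)
      then have "(1 / lam) * inner (y - v) (x - y) \<ge> inner (y - v) (g v)" by simp
      then have "inner (y - v) (x - y) \<ge> lam * inner (y - v) (g v)"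
        using lp by (simp add: field_simps)
      then have "inner (v - y) (x - y) \<le> lam * inner (v - y) (g v)"
        by (smt (verit) inner_minus_left minus_diff_eq mult_minus_right)
      also have "inner (v - y) (g v) = inner (v - x) (g v) + inner (x - y) (g v)"
        by (simp add: inner_diff_left)
      also have "\<dots> \<le> \<bar>inner (v - x) (g v)\<bar> + norm (g v) * norm (x - y)"
      proof -
        have "inner (x - y) (g v) \<le> norm (x - y) * norm (g v)" by (rule norm_cauchy_schwarz)
        then show ?thesis by (simp add: mult.commute)
      qed
      finally show ?thesis using lp by (simp add: mult_left_mono)
    qed
    have xy: "x - y = (\<Sum>v\<in>S. u v *\<^sub>R (v - y))"
    proof -
      have "(\<Sum>v\<in>S. u v *\<^sub>R (v - y)) = (\<Sum>v\<in>S. u v *\<^sub>R v) - (\<Sum>v\<in>S. u v) *\<^sub>R y"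
        by (simp add: scaleR_diff_right sum_subtractf scaleR_sum_left)
      then show ?thesis using u1 ux by simp
    qed
    have "(norm (x - y))^2 = inner (x - y) (x - y)" by (simp add: power2_norm_eq_inner)
    also have "\<dots> = inner (\<Sum>v\<in>S. u v *\<^sub>R (v - y)) (x - y)" by (subst (1) xy) (rule refl)
    also have "\<dots> = (\<Sum>v\<in>S. u v * inner (v - y) (x - y))"
      by (simp add: inner_sum_left)
    also have "\<dots> \<le> (\<Sum>v\<in>S. u v * (lam * (\<bar>inner (v - x) (g v)\<bar> + norm (g v) * norm (x - y))))"
      using trm u0 by (intro sum_mono mult_left_mono) auto
    also have "\<dots> = lam * (K + Sn * norm (x - y))"
      by (simp add: K_def Sn_def sum_distrib_left sum_distrib_right sum.distrib algebra_simps)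
    finally have "norm (x - y) < \<epsilon>" using lr[of "norm (x - y)"] by simp
    moreover have "y \<in> dom_op A" using y by (auto simp: dom_op_def)
    ultimately show "\<exists>y\<in>dom_op A. dist y x < \<epsilon>" by (auto simp: dist_norm norm_minus_commute)
  qed
qed

lemma convex_closure_dom:
  fixes A :: "('a::{real_inner,complete_space}) operator"
  assumes mm: "max_mono A"
  shows "convex (closure (dom_op A))"
proof -
  have "convex hull (dom_op A) \<subseteq> closure (dom_op A)" using hull_in_closure_dom[OF mm] by blast
  then have "closure (convex hull (dom_op A)) \<subseteq> closure (dom_op A)"
    by (metis closure_closure closure_mono)
  moreover have "closure (dom_op A) \<subseteq> closure (convex hull (dom_op A))"
    by (intro closure_mono hull_subset)
  ultimately have "closure (dom_op A) = closure (convex hull (dom_op A))" by blast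
  then show ?thesis by (simp add: convex_closure)
qed

lemma convex_closure_ran:
  fixes A :: "('a::{real_inner,complete_space}) operator"
  assumes mm: "max_mono A"
  shows "convex (closure (ran_op A))"
  using convex_closure_dom[OF max_mono_converse[OF mm]] by (simp add: dom_ran_converse)

lemma mem_uminus_image: "(u \<in> uminus ` X) = (- u \<in> (X :: 'a::ab_group_add set))"
  by (auto intro: image_eqI[of u uminus "- u"])

lemma polar_uminus: "polar_cone (uminus ` S) = uminus ` polar_cone (S :: 'a::real_inner set)"
  by (rule set_eqI) (auto simp: polar_cone_def mem_uminus_image)

lemma uminus_Int: "uminus ` X \<inter> uminus ` Y = uminus ` (X \<inter> (Y :: 'a::ab_group_add set))"
  by (rule set_eqI) (simp add: mem_uminus_image)

lemma rec_iter:
  fixes C :: "'a::real_vector set"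
  assumes d: "d \<in> rec_cone C" and c: "c \<in> C"
  shows "c + real n *\<^sub>R d \<in> C"
proof (induction n)
  case 0 then show ?case using c by simp
next
  case (Suc n)
  then have "(c + real n *\<^sub>R d) + d \<in> C" using d by (simp add: rec_cone_def)
  then show ?case by (simp add: algebra_simps)
qed

lemma arch_nonneg:
  fixes \<alpha> \<beta> \<gamma> :: real
  assumes "\<And>n::nat. \<gamma> \<le> \<alpha> + real n * \<beta>"
  shows "0 \<le> \<beta>"
proof (rule ccontr)
  assume "\<not> 0 \<le> \<beta>"
  then have b: "\<beta> < 0" by simp
  obtain n :: nat where n: "(\<alpha> - \<gamma>) / (- \<beta>) < real n" using reals_Archimedean2 by blast
  then have "\<alpha> - \<gamma> < real n * (- \<beta>)" using b by (simp add: field_simps)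
  then show False using assms[of n] by simp
qed

lemma closure_minus_mem:
  fixes S T :: "'a::real_normed_vector set"
  assumes "x \<in> closure S" "y \<in> closure T"
  shows "x - y \<in> closure (set_minus S T)"
  unfolding closure_approachable
proof (intro allI impI)
  fix e :: real assume e: "e > 0"
  obtain s where s: "s \<in> S" "dist s x < e/2" using assms(1) e unfolding closure_approachable by (meson half_gt_zero)
  obtain t where t: "t \<in> T" "dist t y < e/2" using assms(2) e unfolding closure_approachable by (meson half_gt_zero)
  have "s - t \<in> set_minus S T" using s t by (auto simp: set_minus_def)
  moreover have "dist (s - t) (x - y) < e"
  proof -
    have "dist (s - t) (x - y) = norm ((s - x) - (t - y))" by (simp add: dist_norm algebra_simps)
    also have "\<dots> \<le> norm (s - x) + norm (t - y)" by (rule norm_triangle_ineq4)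
    finally show ?thesis using s t by (simp add: dist_norm)
  qed
  ultimately show "\<exists>z\<in>set_minus S T. dist z (x - y) < e" by blast
qed

lemma closure_plus_mem:
  fixes S T :: "'a::real_normed_vector set"
  assumes "x \<in> closure S" "y \<in> closure T"
  shows "x + y \<in> closure (set_plus S T)"
  unfolding closure_approachable
proof (intro allI impI)
  fix e :: real assume e: "e > 0"
  obtain s where s: "s \<in> S" "dist s x < e/2" using assms(1) e unfolding closure_approachable by (meson half_gt_zero)
  obtain t where t: "t \<in> T" "dist t y < e/2" using assms(2) e unfolding closure_approachable by (meson half_gt_zero)
  have "s + t \<in> set_plus S T" using s t by (auto simp: set_plus_def)
  moreover have "dist (s + t) (x + y) < e"
  proof -
    have "dist (s + t) (x + y) = norm ((s - x) + (t - y))" by (simp add: dist_norm algebra_simps)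
    also have "\<dots> \<le> norm (s - x) + norm (t - y)" by (rule norm_triangle_ineq)
    finally show ?thesis using s t by (simp add: dist_norm)
  qed
  ultimately show "\<exists>z\<in>set_plus S T. dist z (x + y) < e" by blast
qed

lemma closure_set_minus_convex:
  fixes S T :: "'a::real_normed_vector set"
  assumes "convex (closure S)" "convex (closure T)"
  shows "convex (closure (set_minus S T))"
proof -
  let ?U = "(\<Union>x\<in>closure S. \<Union>y\<in>closure T. {x - y})"
  have cu: "convex ?U" using convex_differences[OF assms] .
  have "set_minus S T \<subseteq> ?U"
  proof
    fix z assume "z \<in> set_minus S T"
    then obtain s t where st: "s \<in> S" "t \<in> T" "z = s - t" unfolding set_minus_def by blast
    then have "s \<in> closure S" "t \<in> closure T" using closure_subset by auto
    then show "z \<in> ?U" using st(3) by blast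
  qed
  moreover have "?U \<subseteq> closure (set_minus S T)"
  proof
    fix z assume "z \<in> ?U"
    then obtain x y where xy: "x \<in> closure S" "y \<in> closure T" "z = x - y" by blast
    then show "z \<in> closure (set_minus S T)" using closure_minus_mem[OF xy(1,2)] by simp
  qed
  ultimately have "closure (set_minus S T) = closure ?U"
    by (metis closure_closure closure_mono subset_antisym)
  then show ?thesis using cu by simp
qed

lemma closure_set_plus_convex:
  fixes S T :: "'a::real_normed_vector set"
  assumes "convex (closure S)" "convex (closure T)"
  shows "convex (closure (set_plus S T))"
proof -
  let ?U = "(\<Union>x\<in>closure S. \<Union>y\<in>closure T. {x + y})"
  have cu: "convex ?U" using convex_sums[OF assms] .
  have "set_plus S T \<subseteq> ?U"
  proof
    fix z assume "z \<in> set_plus S T"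
    then obtain s t where st: "s \<in> S" "t \<in> T" "z = s + t" unfolding set_plus_def by blast
    then have "s \<in> closure S" "t \<in> closure T" using closure_subset by auto
    then show "z \<in> ?U" using st(3) by blast
  qed
  moreover have "?U \<subseteq> closure (set_plus S T)"
  proof
    fix z assume "z \<in> ?U"
    then obtain x y where xy: "x \<in> closure S" "y \<in> closure T" "z = x + y" by blast
    then show "z \<in> closure (set_plus S T)" using closure_plus_mem[OF xy(1,2)] by simp
  qed
  ultimately have "closure (set_plus S T) = closure ?U"
    by (metis closure_closure closure_mono subset_antisym)
  then show ?thesis using cu by simp
qed

theorem proposition3p3:
  fixes A B :: "('a::{real_inner, complete_space}) operator"
    and D R :: "'a set" and vD vR :: 'a
  assumes "max_mono A" and "max_mono B"
      and "D = set_minus (dom_op A) (dom_op B)"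
      and "R = set_plus (ran_op A) (ran_op B)"
      and "vD = proj (closure D) 0"
      and "vR = proj (closure R) 0"
  shows
    "(vD \<in> polar_cone (uminus ` rec_cone (closure (dom_op A))) \<inter> polar_cone (rec_cone (closure (dom_op B)))
      \<and> polar_cone (uminus ` rec_cone (closure (dom_op A))) \<inter> polar_cone (rec_cone (closure (dom_op B)))
         = uminus ` polar_cone (rec_cone (closure (dom_op A))) \<inter> polar_cone (rec_cone (closure (dom_op B))))
   \<and> (vD \<in> uminus ` rec_cone (closure (ran_op A)) \<inter> rec_cone (closure (ran_op B)))
   \<and> (vR \<in> polar_cone (uminus ` rec_cone (closure (ran_op A))) \<inter> polar_cone (uminus ` rec_cone (closure (ran_op B)))
      \<and> polar_cone (uminus ` rec_cone (closure (ran_op A))) \<inter> polar_cone (uminus ` rec_cone (closure (ran_op B)))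
         = uminus ` (polar_cone (rec_cone (closure (ran_op A))) \<inter> polar_cone (rec_cone (closure (ran_op B)))))
   \<and> (vR \<in> uminus ` rec_cone (closure (dom_op A)) \<inter> uminus ` rec_cone (closure (dom_op B))
      \<and> uminus ` rec_cone (closure (dom_op A)) \<inter> uminus ` rec_cone (closure (dom_op B))
         = uminus ` (rec_cone (closure (dom_op A)) \<inter> rec_cone (closure (dom_op B))))
   \<and> inner vD vR = 0
   \<and> vD + vR \<in> closure D \<inter> closure R
   \<and> (\<forall>T v. T = (\<lambda>x. x - resolvent A x + resolvent B (reflected_resolvent A x)) \<longrightarrow>
           v = proj (closure (range (\<lambda>x. x - T x))) 0 \<longrightarrow>
           closure (range (\<lambda>x. x - T x)) = closure (D \<inter> R) \<longrightarrow>
           closure (D \<inter> R) = closure D \<inter> closure R \<longrightarrow>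
           v = vD + vR \<and> (norm v)\<^sup>2 = (norm vD)\<^sup>2 + (norm vR)\<^sup>2
             \<and> (norm vD)\<^sup>2 + (norm vR)\<^sup>2 = (norm (vR, vD))\<^sup>2)"
proof -
  let ?CA = "closure (dom_op A)" and ?CB = "closure (dom_op B)"
  let ?RA = "closure (ran_op A)" and ?RB = "closure (ran_op B)"
  note mA = assms(1) and mB = assms(2)
  obtain a0 a0s where a0: "(a0, a0s) \<in> A" using max_mono_nonempty[OF mA] by auto
  obtain b0 b0s where b0: "(b0, b0s) \<in> B" using max_mono_nonempty[OF mB] by auto
  have a0d: "a0 \<in> dom_op A" and a0r: "a0s \<in> ran_op A" using a0 by (auto simp: dom_op_def ran_op_def)
  have b0d: "b0 \<in> dom_op B" and b0r: "b0s \<in> ran_op B" using b0 by (auto simp: dom_op_def ran_op_def)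
  have cvD: "convex (closure D)" unfolding assms(3)
    by (intro closure_set_minus_convex convex_closure_dom mA mB)
  have cvR: "convex (closure R)" unfolding assms(4)
    by (intro closure_set_plus_convex convex_closure_ran mA mB)
  have neD: "closure D \<noteq> {}" using a0d b0d closure_subset by (fastforce simp: assms(3) set_minus_def)
  have neR: "closure R \<noteq> {}" using a0r b0r closure_subset by (fastforce simp: assms(4) set_plus_def)
  have vDin: "vD \<in> closure D" using proj_props(1)[OF closed_closure cvD neD] assms(5) by simp
  have vRin: "vR \<in> closure R" using proj_props(1)[OF closed_closure cvR neR] assms(6) by simp
  have HD: "inner vD z \<ge> (norm vD)^2" if "z \<in> closure D" for z
  proof -
    have "inner (0 - vD) (z - vD) \<le> 0" using proj_props(3)[OF closed_closure cvD neD, of 0] that assms(5) by simp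
    then show ?thesis by (simp add: inner_diff_right power2_norm_eq_inner)
  qed
  have HR: "inner vR z \<ge> (norm vR)^2" if "z \<in> closure R" for z
  proof -
    have "inner (0 - vR) (z - vR) \<le> 0" using proj_props(3)[OF closed_closure cvR neR, of 0] that assms(6) by simp
    then show ?thesis by (simp add: inner_diff_right power2_norm_eq_inner)
  qed
  have HD': "inner vD (x - y) \<ge> (norm vD)^2" if "x \<in> ?CA" "y \<in> ?CB" for x y
    using HD closure_minus_mem[OF that] assms(3) by simp
  have HR': "inner vR (x + y) \<ge> (norm vR)^2" if "x \<in> ?RA" "y \<in> ?RB" for x y
    using HR closure_plus_mem[OF that] assms(4) by simp
  have a0C: "a0 \<in> ?CA" and b0C: "b0 \<in> ?CB" using a0d b0d closure_subset by auto
  have a0R: "a0s \<in> ?RA" and b0R: "b0s \<in> ?RB" using a0r b0r closure_subset by auto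
  have recA: "inner vD d \<ge> 0" if "d \<in> rec_cone ?CA" for d
  proof (rule arch_nonneg)
    fix n :: nat
    have "(norm vD)^2 \<le> inner vD ((a0 + real n *\<^sub>R d) - b0)"
      using HD'[OF rec_iter[OF that a0C] b0C] .
    then show "(norm vD)^2 \<le> inner vD (a0 - b0) + real n * inner vD d"
      by (simp add: inner_diff_right inner_add_right algebra_simps)
  qed
  have recB: "inner vD d \<le> 0" if "d \<in> rec_cone ?CB" for d
  proof -
    have "0 \<le> - inner vD d"
    proof (rule arch_nonneg)
      fix n :: nat
      have "(norm vD)^2 \<le> inner vD (a0 - (b0 + real n *\<^sub>R d))"
        using HD'[OF a0C rec_iter[OF that b0C]] .
      then show "(norm vD)^2 \<le> inner vD (a0 - b0) + real n * (- inner vD d)"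
        by (simp add: inner_diff_right inner_add_right algebra_simps)
    qed
    then show ?thesis by simp
  qed
  have recRA: "inner vR d \<ge> 0" if "d \<in> rec_cone ?RA" for d
  proof (rule arch_nonneg)
    fix n :: nat
    have "(norm vR)^2 \<le> inner vR ((a0s + real n *\<^sub>R d) + b0s)"
      using HR'[OF rec_iter[OF that a0R] b0R] .
    then show "(norm vR)^2 \<le> inner vR (a0s + b0s) + real n * inner vR d"
      by (simp add: inner_add_right algebra_simps)
  qed
  have recRB: "inner vR d \<ge> 0" if "d \<in> rec_cone ?RB" for d
  proof (rule arch_nonneg)
    fix n :: nat
    have "(norm vR)^2 \<le> inner vR (a0s + (b0s + real n *\<^sub>R d))"
      using HR'[OF a0R rec_iter[OF that b0R]] .
    then show "(norm vR)^2 \<le> inner vR (a0s + b0s) + real n * inner vR d"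
      by (simp add: inner_add_right algebra_simps)
  qed
  have i1: "vD \<in> polar_cone (uminus ` rec_cone ?CA) \<inter> polar_cone (rec_cone ?CB)"
    using recA recB by (auto simp: polar_cone_def)
  have i2: "polar_cone (uminus ` rec_cone ?CA) \<inter> polar_cone (rec_cone ?CB)
         = uminus ` polar_cone (rec_cone ?CA) \<inter> polar_cone (rec_cone ?CB)"
    by (simp add: polar_uminus)
  have ii_A: "- vD \<in> rec_cone ?RA"
  proof (rule barrier_rec[OF mA])
    fix a assume "a \<in> dom_op A"
    then have "(norm vD)^2 \<le> inner vD (a - b0)" using HD' closure_subset b0C by blast
    then show "inner (- vD) a \<le> (- ((norm vD)^2)) - inner vD b0" by (simp add: inner_diff_right)
  qed
  have ii_B: "vD \<in> rec_cone ?RB"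
  proof (rule barrier_rec[OF mB])
    fix b assume "b \<in> dom_op B"
    then have "(norm vD)^2 \<le> inner vD (a0 - b)" using HD' closure_subset a0C by blast
    then show "inner vD b \<le> inner vD a0 - (norm vD)^2" by (simp add: inner_diff_right)
  qed
  have ii: "vD \<in> uminus ` rec_cone ?RA \<inter> rec_cone ?RB"
    using ii_A ii_B by (simp add: mem_uminus_image)
  have iii1: "vR \<in> polar_cone (uminus ` rec_cone ?RA) \<inter> polar_cone (uminus ` rec_cone ?RB)"
    using recRA recRB by (auto simp: polar_cone_def)
  have iii2: "polar_cone (uminus ` rec_cone ?RA) \<inter> polar_cone (uminus ` rec_cone ?RB)
         = uminus ` (polar_cone (rec_cone ?RA) \<inter> polar_cone (rec_cone ?RB))"
    by (simp add: polar_uminus uminus_Int)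
  have iv_A: "- vR \<in> rec_cone ?CA"
  proof -
    have "- vR \<in> rec_cone (closure (ran_op (converse A)))"
    proof (rule barrier_rec[OF max_mono_converse[OF mA]])
      fix u assume "u \<in> dom_op (converse A)"
      then have "u \<in> ran_op A" by (simp add: dom_ran_converse)
      then have "(norm vR)^2 \<le> inner vR (u + b0s)" using HR' closure_subset b0R by blast
      then show "inner (- vR) u \<le> inner vR b0s - (norm vR)^2" by (simp add: inner_add_right)
    qed
    then show ?thesis by (simp add: dom_ran_converse)
  qed
  have iv_B: "- vR \<in> rec_cone ?CB"
  proof -
    have "- vR \<in> rec_cone (closure (ran_op (converse B)))"
    proof (rule barrier_rec[OF max_mono_converse[OF mB]])
      fix u assume "u \<in> dom_op (converse B)"
      then have "u \<in> ran_op B" by (simp add: dom_ran_converse)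
      then have "(norm vR)^2 \<le> inner vR (a0s + u)" using HR' closure_subset a0R by blast
      then show "inner (- vR) u \<le> inner vR a0s - (norm vR)^2" by (simp add: inner_add_right)
    qed
    then show ?thesis by (simp add: dom_ran_converse)
  qed
  have iv1: "vR \<in> uminus ` rec_cone ?CA \<inter> uminus ` rec_cone ?CB"
    using iv_A iv_B by (simp add: mem_uminus_image)
  have iv2: "uminus ` rec_cone ?CA \<inter> uminus ` rec_cone ?CB = uminus ` (rec_cone ?CA \<inter> rec_cone ?CB)"
    by (rule uminus_Int)
  have v: "inner vD vR = 0"
    using recA[OF iv_A] recB[OF iv_B] by simp
  have viD: "vD + vR \<in> closure D"
  proof (rule closure_translate_ext[OF _ vDin])
    fix c assume "c \<in> D"
    then obtain a b where ab: "a \<in> dom_op A" "b \<in> dom_op B" "c = a - b" by (auto simp: assms(3) set_minus_def)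
    have "b + - vR \<in> ?CB" using iv_B ab(2) closure_subset by (auto simp: rec_cone_def)
    moreover have "a \<in> ?CA" using ab(1) closure_subset by auto
    ultimately have "a - (b + - vR) \<in> closure D" using closure_minus_mem assms(3) by blast
    then show "c + vR \<in> closure D" by (simp add: ab(3) algebra_simps)
  qed
  have viR: "vD + vR \<in> closure R"
  proof -
    have "vR + vD \<in> closure R"
    proof (rule closure_translate_ext[OF _ vRin])
      fix c assume "c \<in> R"
      then obtain a b where ab: "a \<in> ran_op A" "b \<in> ran_op B" "c = a + b" by (auto simp: assms(4) set_plus_def)
      have "b + vD \<in> ?RB" using ii_B ab(2) closure_subset by (auto simp: rec_cone_def)
      moreover have "a \<in> ?RA" using ab(1) closure_subset by auto
      ultimately have "a + (b + vD) \<in> closure R" using closure_plus_mem assms(4) by blast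
      then show "c + vD \<in> closure R" by (simp add: ab(3) algebra_simps)
    qed
    then show ?thesis by (simp add: add.commute)
  qed
  have vi: "vD + vR \<in> closure D \<inter> closure R" using viD viR by blast
  have nsum: "(norm (vD + vR))^2 = (norm vD)^2 + (norm vR)^2"
    using v unfolding power2_norm_eq_inner by (simp add: inner_add inner_commute)
  have vii: "\<forall>T v. T = (\<lambda>x. x - resolvent A x + resolvent B (reflected_resolvent A x)) \<longrightarrow>
           v = proj (closure (range (\<lambda>x. x - T x))) 0 \<longrightarrow>
           closure (range (\<lambda>x. x - T x)) = closure (D \<inter> R) \<longrightarrow>
           closure (D \<inter> R) = closure D \<inter> closure R \<longrightarrow>
           v = vD + vR \<and> (norm v)\<^sup>2 = (norm vD)\<^sup>2 + (norm vR)\<^sup>2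
             \<and> (norm vD)\<^sup>2 + (norm vR)\<^sup>2 = (norm (vR, vD))\<^sup>2"
  proof (intro allI impI)
    fix T v
    assume h2: "v = proj (closure (range (\<lambda>x. x - T x))) 0"
      and h3: "closure (range (\<lambda>x. x - T x)) = closure (D \<inter> R)"
      and h4: "closure (D \<inter> R) = closure D \<inter> closure R"
    let ?S = "closure D \<inter> closure R"
    let ?a = "vD + vR"
    have vS: "v = proj ?S 0" using h2 h3 h4 by simp
    have big: "inner y ?a \<ge> (norm ?a)^2" if "y \<in> ?S" for y
    proof -
      have "inner vD y \<ge> (norm vD)^2" using HD that by blast
      moreover have "inner vR y \<ge> (norm vR)^2" using HR that by blast
      ultimately show ?thesis using nsum by (simp add: inner_add_right inner_commute)
    qed
    have amin: "norm ?a \<le> norm y" if "y \<in> ?S" for y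
    proof (cases "?a = 0")
      case True then show ?thesis by simp
    next
      case False
      have "(norm ?a)^2 \<le> norm y * norm ?a"
        using big[OF that] norm_cauchy_schwarz[of y ?a] by linarith
      then show ?thesis using False by (simp add: power2_eq_square)
    qed
    have "proj ?S 0 = ?a"
      unfolding proj_def
    proof (rule the_equality)
      show "?a \<in> ?S \<and> (\<forall>y\<in>?S. dist 0 ?a \<le> dist 0 y)" using vi amin by simp
    next
      fix x assume x: "x \<in> ?S \<and> (\<forall>y\<in>?S. dist 0 x \<le> dist 0 y)"
      then have xa: "norm x \<le> norm ?a" using vi by auto
      have xb: "inner x ?a \<ge> (norm ?a)^2" using big x by blast
      have "(norm (x - ?a))^2 = (norm x)^2 - 2 * inner x ?a + (norm ?a)^2"
        unfolding power2_norm_eq_inner by (simp add: inner_diff inner_commute)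
      also have "\<dots> \<le> 0"
      proof -
        have "(norm x)^2 \<le> (norm ?a)^2" using xa by (intro power_mono) auto
        then show ?thesis using xb by linarith
      qed
      finally show "x = ?a" by simp
    qed
    then have va: "v = ?a" using vS by simp
    show "v = vD + vR \<and> (norm v)\<^sup>2 = (norm vD)\<^sup>2 + (norm vR)\<^sup>2
             \<and> (norm vD)\<^sup>2 + (norm vR)\<^sup>2 = (norm (vR, vD))\<^sup>2"
      using va nsum by (simp add: norm_Pair add.commute)
  qed
  show ?thesis using i1 i2 ii iii1 iii2 iv1 iv2 v vi vii by blast
qed

end
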